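(* Let $0\le b<1$ and $0<c<1$. Let $(X,L_1,\dots,L_n)$ be jointly distributed with $X$ finitely supported and $L_i\in\{0,1\}$, and let $\pi$ be a collaborating cryptogenography protocol with full transcript $T$. Suppose that for all $i\in\{1,\dots,n\}$ and all $x$ in the support of $X$, $\Pr(L_i=1\mid X=x)=b$, and that $\Pr(L_i=1\mid T=t,X=x)\le c$ for all $i$ and all $(t,x)$ with $\Pr(T=t,X=x)>0$. Then \[ I(X;T)\le \frac{-b\log(1-c)+c\log(1-b)}{c}\,n. \]
   Context: All logarithms are base $2$. Collaborating cryptogenography protocol: there are $n$ players $\mathrm{plr}_1,\dots,\mathrm{plr}_n$; a secret $X$ (finitely supported) and indicators $L_1,\dots,L_n\in\{0,1\}$ ($L_i=1$ means $\mathrm{plr}_i$ knows $X$) have a joint distribution. A protocol $\pi$ specifies, for every possible partial transcript $t^k=(t_1,\dots,t_k)$ (the tuple of the first $k$ messages): whether communication stops; if not, which player $\mathrm{plr}_i$ sends the next message; and probability distributions $p_?$ and $(p_x)_{x}$ on a finite message set (depending on $t^k$). $\mathrm{plr}_i$ draws the next message, with fresh independent randomness, from $p_?$ if $L_i=0$ and from $p_x$ if $L_i=1$ and $X=x$. There is a number $\mathrm{length}(\pi)$ such that the protocol always stops after at most that many messages. $T$ denotes the random full transcript. *)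

theory Defs
  imports "HOL-Probability.Probability"
begin

text \<open>On partial transcript t (list of
messages sent so far) it either stops (None) or names the next speaker i together
with the distribution p_? (used if L_i = 0) and the family p_x (used if L_i = 1, X = x).\<close>
type_synonym ('x, 'm) protocol = "'m list \<Rightarrow> (nat \<times> 'm pmf \<times> ('x \<Rightarrow> 'm pmf)) option"

text \<open>Run the protocol from partial transcript t with at most k further messages,
for secret x and knowledge indicators l (l i = True means player i knows X).\<close>
fun run_protocol :: "('x, 'm) protocol \<Rightarrow> 'x \<Rightarrow> (nat \<Rightarrow> bool) \<Rightarrow> nat \<Rightarrow> 'm list \<Rightarrow> 'm list pmf" where
  "run_protocol \<pi> x l 0 t = return_pmf t"
| "run_protocol \<pi> x l (Suc k) t =
     (case \<pi> t of
        None \<Rightarrow> return_pmf t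
      | Some (i, pq, px) \<Rightarrow>
          bind_pmf (if l i then px x else pq) (\<lambda>m. run_protocol \<pi> x l k (t @ [m])))"

definition joint_XLT :: "('x \<times> (nat \<Rightarrow> bool)) pmf \<Rightarrow> ('x, 'm) protocol \<Rightarrow> nat
    \<Rightarrow> ('x \<times> (nat \<Rightarrow> bool) \<times> 'm list) pmf" where
  "joint_XLT D \<pi> N = bind_pmf D (\<lambda>(x, l). map_pmf (\<lambda>t. (x, l, t)) (run_protocol \<pi> x l N []))"

definition valid_protocol :: "nat \<Rightarrow> 'x set \<Rightarrow> 'm set \<Rightarrow> nat \<Rightarrow> ('x, 'm) protocol \<Rightarrow> bool" where
  "valid_protocol n XS M N \<pi> \<longleftrightarrow> finite M \<and>
     (\<forall>t. N \<le> length t \<longrightarrow> \<pi> t = None) \<and>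
     (\<forall>t i pq px. \<pi> t = Some (i, pq, px) \<longrightarrow>
         i \<in> {1..n} \<and> set_pmf pq \<subseteq> M \<and> (\<forall>x\<in>XS. set_pmf (px x) \<subseteq> M))"

definition mutual_info :: "('a \<times> 'b) pmf \<Rightarrow> real" where
  "mutual_info P = (\<Sum>ab\<in>set_pmf P.
      pmf P ab * log 2 (pmf P ab / (pmf (map_pmf fst P) (fst ab) * pmf (map_pmf snd P) (snd ab))))"

end

theory Submission
  imports Defs
begin


lemma run_prefix:
  "t \<in> set_pmf (run_protocol \<pi> x l k s) \<Longrightarrow> \<exists>u. t = s @ u"
proof (induction k arbitrary: s)
  case 0 then show ?case by simp
next
  case (Suc k)
  then show ?case
    by (auto split: option.splits if_splits dest!: Suc.IH)
qed

lemma run_nth_len: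
  assumes "pmf (run_protocol \<pi> x l k (s @ [m])) t \<noteq> 0"
  shows "m = t ! length s"
proof -
  from assms have "t \<in> set_pmf (run_protocol \<pi> x l k (s @ [m]))" by (simp add: set_pmf_eq)
  from run_prefix[OF this] obtain u where "t = s @ [m] @ u" by auto
  then show ?thesis by simp
qed

lemma integral_single_pmf:
  fixes f :: "'a \<Rightarrow> real"
  assumes "\<And>m. m \<noteq> m0 \<Longrightarrow> f m = 0"
  shows "measure_pmf.expectation p f = pmf p m0 * f m0"
  using assms by (subst integral_measure_pmf[of "{m0}"]) auto

lemma pmf_run_step:
  assumes "\<pi> s = Some (i, pq, px)"
  shows "pmf (run_protocol \<pi> x l (Suc k) s) t =
     pmf (if l i then px x else pq) (t ! length s) * pmf (run_protocol \<pi> x l k (s @ [t ! length s])) t"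
proof -
  have "pmf (run_protocol \<pi> x l (Suc k) s) t = measure_pmf.expectation (if l i then px x else pq)
     (\<lambda>m. pmf (run_protocol \<pi> x l k (s @ [m])) t)"
    using assms by (cases "l i") (auto simp: pmf_bind)
  also have "\<dots> = pmf (if l i then px x else pq) (t ! length s) * pmf (run_protocol \<pi> x l k (s @ [t ! length s])) t"
    by (rule integral_single_pmf) (metis run_nth_len)
  finally show ?thesis .
qed

lemma pmf_run_none:
  assumes "\<pi> s = None \<or> k = 0"
  shows "pmf (run_protocol \<pi> x l k s) t = (if t = s then 1 else 0)"
  using assms by (cases k) (auto simp: pmf_return)

lemma run_false_indep:
  "run_protocol \<pi> x (\<lambda>_. False) k s = run_protocol \<pi> y (\<lambda>_. False) k s"
  by (induction k arbitrary: s) (auto split: option.splits)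


lemma sum_single:
  assumes "finite A" "a \<in> A" "\<And>t. t \<in> A \<Longrightarrow> t \<noteq> a \<Longrightarrow> f t = 0"
  shows "sum f A = f a"
proof -
  have "sum f A = sum f {a}"
    using assms by (intro sum.mono_neutral_right) auto
  then show ?thesis by simp
qed

definition "Psi (Z::real) z = Z * (- ln (1 - z / Z))"

lemma Psi_eq:
  assumes "a > 0" "z < a"
  shows "Psi a z = a * ln (a / (a - z))"
proof -
  have "1 - z / a = (a - z) / a" using assms by (simp add: field_simps)
  then have "- ln (1 - z / a) = ln (a / (a - z))"
    using assms by (simp add: ln_div)
  then show ?thesis unfolding Psi_def by simp
qed

lemma Psi_zero[simp]: "Psi 0 z = 0" by (simp add: Psi_def)

lemma ln_ge_1_minus: "y > 0 \<Longrightarrow> ln y \<ge> 1 - 1 / (y::real)"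
proof -
  assume y: "y > 0"
  have "ln (1/y) \<le> 1/y - 1" using y by (intro ln_le_minus_one) simp
  then show ?thesis using y by (simp add: ln_div)
qed

lemma lsi_term:
  fixes a b A B :: real
  assumes "a \<ge> 0" "b \<ge> 0" "a > 0 \<Longrightarrow> b > 0" "A > 0" "B > 0"
  shows "a * ln (a / b) \<ge> a * ln (A / B) + a - b * A / B"
proof (cases "a = 0")
  case True then show ?thesis using assms by simp
next
  case False
  then have a: "a > 0" using assms by simp
  then have b: "b > 0" using assms by simp
  have "ln ((a * B) / (b * A)) \<ge> 1 - 1 / ((a * B) / (b * A))"
    using a b assms by (intro ln_ge_1_minus) simp
  then have "a * ln ((a * B) / (b * A)) \<ge> a * (1 - (b * A) / (a * B))"
    using a by (intro mult_left_mono) auto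
  moreover have "ln ((a * B) / (b * A)) = ln (a / b) - ln (A / B)"
    using a b assms by (simp add: ln_div ln_mult)
  moreover have "a * (1 - (b * A) / (a * B)) = a - b * A / B"
    using a assms by (simp add: field_simps)
  ultimately have "a * ln (a / b) - a * ln (A / B) \<ge> a - b * A / B"
    by (simp add: right_diff_distrib)
  then show ?thesis by simp
qed

lemma lsi:
  fixes a b :: "'i \<Rightarrow> real"
  assumes "finite I" "\<And>m. m \<in> I \<Longrightarrow> a m \<ge> 0" "\<And>m. m \<in> I \<Longrightarrow> b m \<ge> 0"
    "\<And>m. m \<in> I \<Longrightarrow> a m > 0 \<Longrightarrow> b m > 0"
    "sum a I > 0" "sum b I > 0"
  shows "(\<Sum>m\<in>I. a m * ln (a m / b m)) \<ge> sum a I * ln (sum a I / sum b I)"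
proof -
  let ?A = "sum a I" and ?B = "sum b I"
  have "(\<Sum>m\<in>I. a m * ln (a m / b m)) \<ge> (\<Sum>m\<in>I. a m * ln (?A / ?B) + a m - b m * ?A / ?B)"
    using assms by (intro sum_mono lsi_term) auto
  also have "(\<Sum>m\<in>I. a m * ln (?A / ?B) + a m - b m * ?A / ?B)
      = ?A * ln (?A / ?B) + ?A - ?B * ?A / ?B"
    by (simp add: sum.distrib sum_subtractf sum_distrib_right sum_divide_distrib[symmetric])
  also have "\<dots> = ?A * ln (?A / ?B)" using assms by simp
  finally show ?thesis .
qed

lemma psi_convex_bound:
  fixes q c :: real
  assumes "0 \<le> q" "q \<le> c" "0 < c" "c < 1"
  shows "- ln (1 - q) \<le> q / c * (- ln (1 - c))"
proof -
  have h: "(1 - q/c) * ln 1 + (q/c) * ln (1 - c) \<le> ln ((1 - q/c) *\<^sub>R 1 + (q/c) *\<^sub>R (1 - c))"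
    using assms by (intro concave_onD[OF ln_concave]) (auto simp: field_simps)
  have eq: "(1 - q/c) *\<^sub>R 1 + (q/c) *\<^sub>R (1 - c) = 1 - q" using assms by (simp add: field_simps)
  have "(1 - q/c) * ln 1 + (q/c) * ln (1 - c) \<le> ln (1 - q)" using h unfolding eq .
  then have "(q/c) * ln (1 - c) \<le> ln (1 - q)" by simp
  then show ?thesis by simp
qed


lemma Psi_ln:
  assumes "a \<ge> 0" "z \<le> c * a" "c < 1"
  shows "Psi a z = a * ln (a / (a - z))"
proof (cases "a = 0")
  case True then show ?thesis by simp
next
  case False
  then have "a > 0" using assms by simp
  moreover have "z < a" using assms \<open>a > 0\<close>
    by (smt (verit) mult_less_cancel_right2)
  ultimately show ?thesis by (rule Psi_eq)
qed

lemma key_ineq: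
  fixes A :: "'m \<Rightarrow> real" and B :: "nat \<Rightarrow> 'm \<Rightarrow> real" and p :: "'m \<Rightarrow> real"
    and Z :: real and z :: "nat \<Rightarrow> real" and c :: real
  assumes finM: "finite M" and finJ: "finite J" and iJ: "i \<in> J" and c: "0 < c" "c < 1"
    and A0: "\<And>m. m \<in> M \<Longrightarrow> A m \<ge> 0"
    and B0: "\<And>j m. j \<in> J \<Longrightarrow> m \<in> M \<Longrightarrow> B j m \<ge> 0"
    and Bc: "\<And>j m. j \<in> J \<Longrightarrow> m \<in> M \<Longrightarrow> B j m \<le> c * A m"
    and p0: "\<And>m. m \<in> M \<Longrightarrow> p m \<ge> 0"
    and sA: "sum A M = Z" and sB: "\<And>j. j \<in> J \<Longrightarrow> sum (B j) M = z j"
    and ABi: "\<And>m. m \<in> M \<Longrightarrow> A m - B i m = p m * (Z - z i)"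
  shows "(\<Sum>m\<in>M. A m * ln (A m / (Z * p m))) + (\<Sum>j\<in>J. Psi Z (z j))
           \<le> (\<Sum>j\<in>J. \<Sum>m\<in>M. Psi (A m) (B j m))"
proof -
  have Z0: "Z \<ge> 0" using sA A0 by (metis sum_nonneg)
  show ?thesis
  proof (cases "Z = 0")
    case True
    then have "\<forall>m\<in>M. A m = 0" using sA A0 finM by (simp add: sum_nonneg_eq_0_iff)
    then show ?thesis using True by simp
  next
    case False
    then have Zp: "Z > 0" using Z0 by simp
    have zc: "z j \<le> c * Z" if "j \<in> J" for j
    proof -
      have "z j = sum (B j) M" using sB that by simp
      also have "\<dots> \<le> (\<Sum>m\<in>M. c * A m)" using Bc that by (intro sum_mono) auto
      also have "\<dots> = c * Z" using sA by (simp add: sum_distrib_left[symmetric])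
      finally show ?thesis .
    qed
    have Zz: "Z - z j > 0" if "j \<in> J" for j
      using zc[OF that] c Zp by (smt (verit) mult_less_cancel_right2)
    have PsiB: "Psi (A m) (B j m) = A m * ln (A m / (A m - B j m))" if "j \<in> J" "m \<in> M" for j m
      using Psi_ln[OF A0[OF that(2)] Bc[OF that] c(2)] .
    have parti: "(\<Sum>m\<in>M. Psi (A m) (B i m)) = (\<Sum>m\<in>M. A m * ln (A m / (Z * p m))) + Psi Z (z i)"
    proof -
      have "Psi (A m) (B i m) = A m * ln (A m / (Z * p m)) + A m * ln (Z / (Z - z i))" if m: "m \<in> M" for m
      proof (cases "A m = 0")
        case True then show ?thesis by simp
      next
        case False
        then have Am: "A m > 0" using A0 m by (simp add: less_le)
        have "B i m < A m" using Bc[OF iJ m] c Am by (smt (verit) mult_less_cancel_right2)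
        then have pp: "p m * (Z - z i) > 0" using ABi[OF m] by linarith
        then have pm: "p m > 0" using Zz[OF iJ] p0 m by (simp add: zero_less_mult_iff)
        have "Psi (A m) (B i m) = A m * ln (A m / (p m * (Z - z i)))"
          using PsiB[OF iJ m] ABi[OF m] by simp
        also have "ln (A m / (p m * (Z - z i))) = ln (A m / (Z * p m)) + ln (Z / (Z - z i))"
          using Am pm Zp Zz[OF iJ] by (simp add: ln_div ln_mult)
        finally show ?thesis by (simp add: distrib_left)
      qed
      then have "(\<Sum>m\<in>M. Psi (A m) (B i m)) = (\<Sum>m\<in>M. A m * ln (A m / (Z * p m))) + (\<Sum>m\<in>M. A m) * ln (Z / (Z - z i))"
        by (simp add: sum.distrib sum_distrib_right)
      also have "(\<Sum>m\<in>M. A m) * ln (Z / (Z - z i)) = Psi Z (z i)"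
        using sA Psi_eq[OF Zp] Zz[OF iJ] by simp
      finally show ?thesis .
    qed
    have partj: "Psi Z (z j) \<le> (\<Sum>m\<in>M. Psi (A m) (B j m))" if j: "j \<in> J" for j
    proof -
      have "(\<Sum>m\<in>M. Psi (A m) (B j m)) = (\<Sum>m\<in>M. A m * ln (A m / (A m - B j m)))"
        using PsiB j by simp
      also have "\<dots> \<ge> sum A M * ln (sum A M / (\<Sum>m\<in>M. A m - B j m))"
      proof (rule lsi[OF finM])
        show "A m \<ge> 0" if "m \<in> M" for m using A0 that .
        show "A m - B j m \<ge> 0" if "m \<in> M" for m
          using Bc[OF j that] A0[OF that] c by (smt (verit) mult_left_le_one_le)
        show "A m - B j m > 0" if "m \<in> M" "A m > 0" for m
          using Bc[OF j that(1)] that(2) c by (smt (verit) mult_less_cancel_right2)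
        show "sum A M > 0" using sA Zp by simp
        show "(\<Sum>m\<in>M. A m - B j m) > 0" using sA sB[OF j] Zz[OF j] by (simp add: sum_subtractf)
      qed
      also have "sum A M * ln (sum A M / (\<Sum>m\<in>M. A m - B j m)) = Psi Z (z j)"
        using sA sB[OF j] Psi_eq[OF Zp] Zz[OF j] by (simp add: sum_subtractf)
      finally show ?thesis .
    qed
    have "(\<Sum>j\<in>J. \<Sum>m\<in>M. Psi (A m) (B j m)) = (\<Sum>m\<in>M. Psi (A m) (B i m)) + (\<Sum>j\<in>J - {i}. \<Sum>m\<in>M. Psi (A m) (B j m))"
      using finJ iJ by (simp add: sum.remove)
    also have "\<dots> \<ge> (\<Sum>m\<in>M. A m * ln (A m / (Z * p m))) + Psi Z (z i) + (\<Sum>j\<in>J - {i}. Psi Z (z j))"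
      unfolding parti using partj by (intro add_left_mono sum_mono) auto
    finally show ?thesis using finJ iJ by (simp add: sum.remove add.assoc)
  qed
qed


lemma Psi_bound:
  assumes "0 \<le> z" "z \<le> c * w" "0 < c" "c < 1"
  shows "Psi w z \<le> z / c * (- ln (1 - c))"
proof (cases "w = 0")
  case True
  then have "z = 0" using assms by simp
  then show ?thesis using True by simp
next
  case False
  have w: "w > 0"
  proof (rule ccontr)
    assume "\<not> w > 0"
    then have "w < 0" using False by simp
    then have "c * w < 0" using assms by (simp add: mult_pos_neg)
    then show False using assms by linarith
  qed
  have "z / w \<le> c" using assms w by (simp add: divide_le_eq mult.commute)
  then have "- ln (1 - z / w) \<le> (z / w) / c * (- ln (1 - c))"
    using assms w by (intro psi_convex_bound) auto
  then have "w * (- ln (1 - z / w)) \<le> w * ((z / w) / c * (- ln (1 - c)))"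
    using w by (intro mult_left_mono) auto
  also have "\<dots> = z / c * (- ln (1 - c))" using w by simp
  finally show ?thesis unfolding Psi_def .
qed

lemma prob_bind_pmf:
  "measure_pmf.prob (bind_pmf M f) X = (\<integral>x. measure_pmf.prob (f x) X \<partial>M)"
  unfolding measure_pmf_bind
  by (rule measure_pmf.measure_bind[where N="count_space UNIV"]) (auto simp: space_subprob_algebra measure_pmf_in_subprob_algebra intro: prob_space_imp_subprob_space measure_pmf.prob_space_axioms)


lemma gibbs_term:
  fixes p q :: real
  assumes "p \<ge> 0" "q \<ge> 0" "p > 0 \<Longrightarrow> q > 0"
  shows "p * ln (p / q) \<ge> p - q"
proof (cases "p = 0")
  case True then show ?thesis using assms by simp
next
  case False
  then have p: "p > 0" using assms by simp
  then have q: "q > 0" using assms by simp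
  have "ln (p / q) \<ge> 1 - 1 / (p / q)" using p q by (intro ln_ge_1_minus) simp
  then have "p * ln (p / q) \<ge> p * (1 - 1 / (p / q))" using p by (intro mult_left_mono) auto
  also have "p * (1 - 1 / (p / q)) = p - q" using p q by (simp add: field_simps)
  finally show ?thesis .
qed



locale proto =
  fixes \<pi> :: "('x, 'm) protocol" and x :: 'x and n :: nat and M :: "'m set"
    and E :: "'a pmf" and L :: "'a \<Rightarrow> nat \<Rightarrow> bool"
  assumes finM: "finite M"
    and spk: "\<And>t i pq px. \<pi> t = Some (i, pq, px) \<Longrightarrow> i \<in> {1..n} \<and> set_pmf pq \<subseteq> M \<and> set_pmf (px x) \<subseteq> M"
begin

definition "U k s = (\<lambda>u. s @ u) ` {u. set u \<subseteq> M \<and> length u \<le> k}"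

lemma finite_U: "finite (U k s)"
  unfolding U_def using finite_lists_length_le[OF finM] by blast

lemma s_in_U: "s \<in> U k s"
  unfolding U_def by (rule image_eqI[of _ _ "[]"]) auto

lemma run_support: "set_pmf (run_protocol \<pi> x l k s) \<subseteq> U k s"
proof (induction k arbitrary: s)
  case 0 then show ?case by (simp add: s_in_U)
next
  case (Suc k)
  show ?case
  proof (cases "\<pi> s")
    case None then show ?thesis by (simp add: s_in_U)
  next
    case (Some a)
    obtain i pq px where a: "a = (i, pq, px)" by (cases a) auto
    have sub: "set_pmf (if l i then px x else pq) \<subseteq> M" using spk[of s i pq px] Some a by auto
    show ?thesis
    proof
      fix t assume "t \<in> set_pmf (run_protocol \<pi> x l (Suc k) s)"
      then obtain m where m: "m \<in> set_pmf (if l i then px x else pq)"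
        and t: "t \<in> set_pmf (run_protocol \<pi> x l k (s @ [m]))"
        using Some a by auto
      from t Suc.IH have "t \<in> U k (s @ [m])" by blast
      then obtain u where "t = s @ [m] @ u" "set u \<subseteq> M" "length u \<le> k" unfolding U_def by auto
      then show "t \<in> U (Suc k) s" unfolding U_def using m sub
        by (intro image_eqI[of _ _ "m # u"]) auto
    qed
  qed
qed

lemma U_Suc: "U (Suc k) s = insert s (\<Union>m\<in>M. U k (s @ [m]))"
proof
  show "U (Suc k) s \<subseteq> insert s (\<Union>m\<in>M. U k (s @ [m]))"
  proof
    fix t assume "t \<in> U (Suc k) s"
    then obtain u where u: "t = s @ u" "set u \<subseteq> M" "length u \<le> Suc k" unfolding U_def by auto
    show "t \<in> insert s (\<Union>m\<in>M. U k (s @ [m]))"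
    proof (cases u)
      case Nil then show ?thesis using u by simp
    next
      case (Cons m u')
      then show ?thesis using u unfolding U_def by (auto intro!: bexI[of _ m] image_eqI[of _ _ u'])
    qed
  qed
next
  show "insert s (\<Union>m\<in>M. U k (s @ [m])) \<subseteq> U (Suc k) s"
    using s_in_U unfolding U_def by (auto intro!: image_eqI[of _ _ "_ # _"])
qed

lemma U_nth: "t \<in> U k (s @ [m]) \<Longrightarrow> t ! length s = m"
  unfolding U_def by auto

lemma s_notin_U: "s \<notin> U k (s @ [m])"
  unfolding U_def by auto

lemma sum_U_Suc:
  "(\<Sum>t\<in>U (Suc k) s. f t) = f s + (\<Sum>m\<in>M. \<Sum>t\<in>U k (s @ [m]). f t)"
proof -
  have "(\<Sum>t\<in>U (Suc k) s. f t) = f s + (\<Sum>t\<in>(\<Union>m\<in>M. U k (s @ [m])). f t)"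
    unfolding U_Suc using finM finite_U s_notin_U by (subst sum.insert) auto
  also have "(\<Sum>t\<in>(\<Union>m\<in>M. U k (s @ [m])). f t) = (\<Sum>m\<in>M. \<Sum>t\<in>U k (s @ [m]). f t)"
    using finM finite_U by (intro sum.UNION_disjoint) (auto dest: U_nth)
  finally show ?thesis .
qed

definition "W g k s t = (\<integral>a. g a * pmf (run_protocol \<pi> x (L a) k s) t \<partial>E)"

definition "bnd g \<longleftrightarrow> (\<forall>a. 0 \<le> g a \<and> g a \<le> (1::real))"

lemma integrable_bnd:
  assumes "\<And>a. \<bar>f a\<bar> \<le> (1::real)"
  shows "integrable (measure_pmf E) f"
  by (rule measure_pmf.integrable_const_bound[where B=1]) (use assms in auto)

lemma W_integrable:
  "bnd g \<Longrightarrow> integrable (measure_pmf E) (\<lambda>a. g a * pmf (run_protocol \<pi> x (L a) k s) t)"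
  unfolding bnd_def
  by (rule integrable_bnd) (auto simp: abs_mult intro!: mult_le_one pmf_le_1)

lemma W_nonneg: "bnd g \<Longrightarrow> W g k s t \<ge> 0"
  unfolding W_def bnd_def by (intro integral_nonneg_AE) auto

lemma W_outside: "t \<notin> U k s \<Longrightarrow> W g k s t = 0"
proof -
  assume "t \<notin> U k s"
  then have "\<And>l. pmf (run_protocol \<pi> x l k s) t = 0"
    using run_support by (meson pmf_eq_0_set_pmf subsetD)
  then show ?thesis unfolding W_def by simp
qed

lemma W_sum: "bnd g \<Longrightarrow> (\<Sum>t\<in>U k s. W g k s t) = (\<integral>a. g a \<partial>E)"
proof -
  assume g: "bnd g"
  have "(\<Sum>t\<in>U k s. W g k s t) = (\<integral>a. (\<Sum>t\<in>U k s. g a * pmf (run_protocol \<pi> x (L a) k s) t) \<partial>E)"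
    unfolding W_def by (rule Bochner_Integration.integral_sum[where f="\<lambda>t a. g a * pmf (run_protocol \<pi> x (L a) k s) t", symmetric]) (rule W_integrable[OF g])
  also have "\<dots> = (\<integral>a. g a \<partial>E)"
    by (simp add: sum_distrib_left[symmetric] sum_pmf_eq_1[OF finite_U run_support])
  finally show ?thesis .
qed

lemma W_le: "bnd g \<Longrightarrow> W g k s t \<le> (\<integral>a. g a \<partial>E)"
proof (cases "t \<in> U k s")
  case True
  assume g: "bnd g"
  have "W g k s t \<le> (\<Sum>t\<in>U k s. W g k s t)"
    using True g finite_U W_nonneg by (intro member_le_sum) auto
  then show ?thesis using W_sum g by simp
next
  case False
  assume g: "bnd g"
  then have "0 \<le> (\<integral>a. g a \<partial>E)" unfolding bnd_def by (intro integral_nonneg_AE) auto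
  then show ?thesis using W_outside False by simp
qed

lemma W_step:
  assumes "\<pi> s = Some (i, pq, px)"
  shows "W g (Suc k) s t = W (\<lambda>a. g a * pmf (if L a i then px x else pq) (t ! length s)) k (s @ [t ! length s]) t"
  unfolding W_def pmf_run_step[where \<pi>=\<pi> and s=s, OF assms] by (simp add: mult.assoc)

lemma W_none:
  assumes "\<pi> s = None \<or> k = 0"
  shows "W g k s t = (if t = s then (\<integral>a. g a \<partial>E) else 0)"
  unfolding W_def pmf_run_none[where \<pi>=\<pi> and s=s and k=k, OF assms] by simp

end



context proto begin

definition "G g j = (\<lambda>a. g a * (if L a j then 1 else (0::real)))"

abbreviation "Qr k s \<equiv> run_protocol \<pi> x (\<lambda>_. False) k s"

lemma bnd_G: "bnd g \<Longrightarrow> bnd (G g j)"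
  unfolding bnd_def G_def by auto

lemma main_base:
  assumes "\<pi> s = None \<or> k = 0"
  shows "(\<forall>t\<in>U k s. W g k s t > 0 \<longrightarrow> pmf (Qr k s) t > 0) \<and>
   (\<Sum>t\<in>U k s. W g k s t * ln (W g k s t / ((\<integral>a. g a \<partial>E) * pmf (Qr k s) t)))
     \<le> (\<Sum>t\<in>U k s. \<Sum>j\<in>{1..n}. Psi (W g k s t) (W (G g j) k s t))
        - (\<Sum>j\<in>{1..n}. Psi (\<integral>a. g a \<partial>E) (\<integral>a. G g j a \<partial>E))"
proof -
  have Q: "pmf (Qr k s) t = (if t = s then 1 else 0)" for t
    using pmf_run_none[where \<pi>=\<pi> and s=s and k=k, OF assms] .
  have l: "(\<Sum>t\<in>U k s. W g k s t * ln (W g k s t / ((\<integral>a. g a \<partial>E) * pmf (Qr k s) t))) = 0"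
    by (subst sum_single[OF finite_U s_in_U]) (auto simp: W_none[OF assms] Q)
  have r: "(\<Sum>t\<in>U k s. \<Sum>j\<in>{1..n}. Psi (W g k s t) (W (G g j) k s t))
       = (\<Sum>j\<in>{1..n}. Psi (\<integral>a. g a \<partial>E) (\<integral>a. G g j a \<partial>E))"
    by (subst sum_single[OF finite_U s_in_U]) (auto simp: W_none[OF assms])
  show ?thesis using l r by (auto simp: Q W_none[OF assms])
qed

definition "concl k s g \<longleftrightarrow> (\<forall>t\<in>U k s. W g k s t > 0 \<longrightarrow> pmf (Qr k s) t > 0) \<and>
   (\<Sum>t\<in>U k s. W g k s t * ln (W g k s t / ((\<integral>a. g a \<partial>E) * pmf (Qr k s) t)))
     \<le> (\<Sum>t\<in>U k s. \<Sum>j\<in>{1..n}. Psi (W g k s t) (W (G g j) k s t))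
        - (\<Sum>j\<in>{1..n}. Psi (\<integral>a. g a \<partial>E) (\<integral>a. G g j a \<partial>E))"

lemma main_step:
  assumes c: "0 < c" "c < 1" and Some: "\<pi> s = Some (i, pq, px)" and g: "bnd g"
    and hyp: "\<forall>t\<in>U (Suc k) s. \<forall>j\<in>{1..n}. W (G g j) (Suc k) s t \<le> c * W g (Suc k) s t"
    and IH: "\<And>s' g'. bnd g' \<Longrightarrow> (\<forall>t\<in>U k s'. \<forall>j\<in>{1..n}. W (G g' j) k s' t \<le> c * W g' k s' t)
               \<Longrightarrow> concl k s' g'"
  shows "concl (Suc k) s g"
proof -
  define r where "r a m = pmf (if L a i then px x else pq) m" for a m
  define gm where "gm m = (\<lambda>a. g a * r a m)" for m
  define Zg where "Zg = (\<integral>a. g a \<partial>E)"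
  define A where "A m = (\<integral>a. gm m a \<partial>E)" for m
  define B where "B j m = (\<integral>a. G (gm m) j a \<partial>E)" for j m
  define z where "z j = (\<integral>a. G g j a \<partial>E)" for j
  have iJ: "i \<in> {1..n}" and pqM: "set_pmf pq \<subseteq> M" and pxM: "set_pmf (px x) \<subseteq> M"
    using spk[OF Some] by auto
  have rM: "set_pmf (if L a i then px x else pq) \<subseteq> M" for a using pqM pxM by auto
  have r01: "0 \<le> r a m" "r a m \<le> 1" for a m unfolding r_def by (auto simp: pmf_le_1)
  have bgm: "bnd (gm m)" for m
    using g r01 unfolding bnd_def gm_def by (auto intro: mult_le_one)
  have Ggm: "G (gm m) j = (\<lambda>a. G g j a * r a m)" for m j
    unfolding G_def gm_def by auto
  have Wg: "W g (Suc k) s t = W (gm m) k (s @ [m]) t" if "t \<in> U k (s @ [m])" for t m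
    unfolding W_step[OF Some] U_nth[OF that] gm_def r_def ..
  have WG: "W (G g j) (Suc k) s t = W (G (gm m) j) k (s @ [m]) t" if "t \<in> U k (s @ [m])" for t m j
    unfolding W_step[OF Some] U_nth[OF that] Ggm r_def ..
  have Qs: "pmf (Qr (Suc k) s) t = pmf pq m * pmf (Qr k (s @ [m])) t" if "t \<in> U k (s @ [m])" for t m
    using pmf_run_step[where \<pi>=\<pi> and s=s and l="\<lambda>_. False", OF Some] U_nth[OF that] by simp
  have W0: "W h (Suc k) s s = 0" for h
    unfolding W_step[OF Some] by (rule W_outside[OF s_notin_U])
  have hypm: "\<forall>t\<in>U k (s @ [m]). \<forall>j\<in>{1..n}. W (G (gm m) j) k (s @ [m]) t \<le> c * W (gm m) k (s @ [m]) t"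
    if "m \<in> M" for m
    using hyp that unfolding U_Suc by (auto simp: Wg WG)
  have IHm: "concl k (s @ [m]) (gm m)" if "m \<in> M" for m
    using IH[OF bgm hypm[OF that]] .
  have sumr: "(\<Sum>m\<in>M. \<integral>a. h a * r a m \<partial>E) = (\<integral>a. h a \<partial>E)" if h: "bnd h" for h
  proof -
    have "(\<Sum>m\<in>M. \<integral>a. h a * r a m \<partial>E) = (\<integral>a. (\<Sum>m\<in>M. h a * r a m) \<partial>E)"
      using h r01 unfolding bnd_def
      by (intro Bochner_Integration.integral_sum[where f="\<lambda>m a. h a * r a m", symmetric] integrable_bnd)
         (auto simp: abs_mult intro: mult_le_one)
    also have "\<dots> = (\<integral>a. h a \<partial>E)"
      unfolding r_def by (simp add: sum_distrib_left[symmetric] sum_pmf_eq_1[OF finM rM])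
    finally show ?thesis .
  qed
  have sA: "sum A M = Zg" unfolding A_def gm_def Zg_def using sumr[OF g] by simp
  have sB: "sum (B j) M = z j" for j unfolding B_def Ggm z_def using sumr[OF bnd_G[OF g]] by simp
  have A0: "A m \<ge> 0" for m using bgm[of m] unfolding A_def bnd_def by (intro integral_nonneg_AE) auto
  have B0: "B j m \<ge> 0" for j m using bnd_G[OF bgm[of m]] unfolding B_def bnd_def by (intro integral_nonneg_AE) auto
  have Bc: "B j m \<le> c * A m" if "j \<in> {1..n}" "m \<in> M" for j m
  proof -
    have "B j m = (\<Sum>t\<in>U k (s @ [m]). W (G (gm m) j) k (s @ [m]) t)"
      unfolding B_def using W_sum[OF bnd_G[OF bgm]] by simp
    also have "\<dots> \<le> (\<Sum>t\<in>U k (s @ [m]). c * W (gm m) k (s @ [m]) t)"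
      using hypm[OF that(2)] that(1) by (intro sum_mono) auto
    also have "\<dots> = c * A m" unfolding A_def using W_sum[OF bgm] by (simp add: sum_distrib_left[symmetric])
    finally show ?thesis .
  qed
  have ABi: "A m - B i m = pmf pq m * (Zg - z i)" for m
  proof -
    have pw: "gm m a - G (gm m) i a = pmf pq m * (g a - G g i a)" for a
      unfolding gm_def G_def r_def by auto
    have ig: "integrable (measure_pmf E) h" if "bnd h" for h
      using that unfolding bnd_def by (intro integrable_bnd) auto
    have "A m - B i m = (\<integral>a. gm m a - G (gm m) i a \<partial>E)"
      unfolding A_def B_def by (rule Bochner_Integration.integral_diff[symmetric]) (auto intro: ig bgm bnd_G)
    also have "\<dots> = (\<integral>a. pmf pq m * (g a - G g i a) \<partial>E)" unfolding pw ..
    also have "\<dots> = pmf pq m * (Zg - z i)"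
      unfolding Zg_def z_def using ig[OF g] ig[OF bnd_G[OF g]] by simp
    finally show ?thesis .
  qed
  have key: "(\<Sum>m\<in>M. A m * ln (A m / (Zg * pmf pq m))) + (\<Sum>j\<in>{1..n}. Psi Zg (z j))
           \<le> (\<Sum>j\<in>{1..n}. \<Sum>m\<in>M. Psi (A m) (B j m))"
    by (rule key_ineq[OF finM _ iJ c]) (auto simp: A0 B0 Bc sA sB ABi)
  have Am_le: "A m \<le> Zg" if "m \<in> M" for m
    using sA A0 finM that by (metis member_le_sum)
  have posm: "pmf (Qr k (s @ [m])) t > 0 \<and> pmf pq m > 0 \<and> A m > 0 \<and> Zg > 0"
    if m: "m \<in> M" and t: "t \<in> U k (s @ [m])" and W: "W (gm m) k (s @ [m]) t > 0" for m t
  proof -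
    have Q: "pmf (Qr k (s @ [m])) t > 0" using IHm[OF m] t W unfolding concl_def by auto
    have Am: "A m > 0" using W W_le[OF bgm[of m], of k "s @ [m]" t] unfolding A_def by simp
    have "B i m < A m" using Bc[OF iJ m] c Am by (smt (verit) mult_less_cancel_right2)
    then have pp: "pmf pq m * (Zg - z i) > 0" using ABi[of m] by linarith
    have "Zg - z i \<ge> 0"
    proof -
      have "z i = sum (B i) M" using sB by simp
      also have "\<dots> \<le> sum A M" using Bc iJ c A0 by (intro sum_mono) (smt (verit) mult_left_le_one_le)
      finally show ?thesis using sA by simp
    qed
    then have "pmf pq m > 0" using pp by (simp add: zero_less_mult_iff)
    then show ?thesis using Q Am Am_le[OF m] by simp
  qed
  have lhs_m: "(\<Sum>t\<in>U k (s @ [m]). W (gm m) k (s @ [m]) t * ln (W (gm m) k (s @ [m]) t / (Zg * (pmf pq m * pmf (Qr k (s @ [m])) t))))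
      = (\<Sum>t\<in>U k (s @ [m]). W (gm m) k (s @ [m]) t * ln (W (gm m) k (s @ [m]) t / (A m * pmf (Qr k (s @ [m])) t)))
        + A m * ln (A m / (Zg * pmf pq m))" if m: "m \<in> M" for m
  proof -
    have tw: "W (gm m) k (s @ [m]) t * ln (W (gm m) k (s @ [m]) t / (Zg * (pmf pq m * pmf (Qr k (s @ [m])) t)))
      = W (gm m) k (s @ [m]) t * ln (W (gm m) k (s @ [m]) t / (A m * pmf (Qr k (s @ [m])) t))
        + W (gm m) k (s @ [m]) t * ln (A m / (Zg * pmf pq m))" if t: "t \<in> U k (s @ [m])" for t
    proof (cases "W (gm m) k (s @ [m]) t = 0")
      case True then show ?thesis by simp
    next
      case False
      then have Wp: "W (gm m) k (s @ [m]) t > 0" using W_nonneg[OF bgm[of m]] by (simp add: less_le)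
      from posm[OF m t Wp] have "pmf (Qr k (s @ [m])) t > 0" "pmf pq m > 0" "A m > 0" "Zg > 0" by auto
      then have "ln (W (gm m) k (s @ [m]) t / (Zg * (pmf pq m * pmf (Qr k (s @ [m])) t)))
        = ln (W (gm m) k (s @ [m]) t / (A m * pmf (Qr k (s @ [m])) t)) + ln (A m / (Zg * pmf pq m))"
        using Wp by (simp add: ln_div ln_mult)
      then show ?thesis by (simp add: distrib_left)
    qed
    have "(\<Sum>t\<in>U k (s @ [m]). W (gm m) k (s @ [m]) t) = A m" unfolding A_def by (rule W_sum[OF bgm])
    then show ?thesis
      by (simp add: tw sum.distrib sum_distrib_right[symmetric])
  qed
  have L: "(\<Sum>t\<in>U (Suc k) s. W g (Suc k) s t * ln (W g (Suc k) s t / (Zg * pmf (Qr (Suc k) s) t)))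
     = (\<Sum>m\<in>M. \<Sum>t\<in>U k (s @ [m]). W (gm m) k (s @ [m]) t * ln (W (gm m) k (s @ [m]) t / (Zg * (pmf pq m * pmf (Qr k (s @ [m])) t))))"
    unfolding sum_U_Suc W0 mult_zero_left add_0_left
    by (intro sum.cong refl) (simp only: Wg Qs)
  have R: "(\<Sum>t\<in>U (Suc k) s. \<Sum>j\<in>{1..n}. Psi (W g (Suc k) s t) (W (G g j) (Suc k) s t))
     = (\<Sum>m\<in>M. \<Sum>t\<in>U k (s @ [m]). \<Sum>j\<in>{1..n}. Psi (W (gm m) k (s @ [m]) t) (W (G (gm m) j) k (s @ [m]) t))"
    unfolding sum_U_Suc W0 by (auto intro!: sum.cong simp: Wg WG)
  have IHi: "(\<Sum>t\<in>U k (s @ [m]). W (gm m) k (s @ [m]) t * ln (W (gm m) k (s @ [m]) t / (A m * pmf (Qr k (s @ [m])) t)))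
     \<le> (\<Sum>t\<in>U k (s @ [m]). \<Sum>j\<in>{1..n}. Psi (W (gm m) k (s @ [m]) t) (W (G (gm m) j) k (s @ [m]) t))
        - (\<Sum>j\<in>{1..n}. Psi (A m) (B j m))" if "m \<in> M" for m
    using IHm[OF that] unfolding concl_def A_def B_def by blast
  have ineq: "(\<Sum>t\<in>U (Suc k) s. W g (Suc k) s t * ln (W g (Suc k) s t / (Zg * pmf (Qr (Suc k) s) t)))
     \<le> (\<Sum>t\<in>U (Suc k) s. \<Sum>j\<in>{1..n}. Psi (W g (Suc k) s t) (W (G g j) (Suc k) s t))
        - (\<Sum>j\<in>{1..n}. Psi Zg (z j))"
  proof -
    have "(\<Sum>t\<in>U (Suc k) s. W g (Suc k) s t * ln (W g (Suc k) s t / (Zg * pmf (Qr (Suc k) s) t)))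
       \<le> (\<Sum>m\<in>M. (\<Sum>t\<in>U k (s @ [m]). \<Sum>j\<in>{1..n}. Psi (W (gm m) k (s @ [m]) t) (W (G (gm m) j) k (s @ [m]) t))
        - (\<Sum>j\<in>{1..n}. Psi (A m) (B j m)) + A m * ln (A m / (Zg * pmf pq m)))"
      unfolding L
    proof (rule sum_mono)
      fix m assume m: "m \<in> M"
      show "(\<Sum>t\<in>U k (s @ [m]). W (gm m) k (s @ [m]) t * ln (W (gm m) k (s @ [m]) t / (Zg * (pmf pq m * pmf (Qr k (s @ [m])) t))))
       \<le> (\<Sum>t\<in>U k (s @ [m]). \<Sum>j\<in>{1..n}. Psi (W (gm m) k (s @ [m]) t) (W (G (gm m) j) k (s @ [m]) t))
        - (\<Sum>j\<in>{1..n}. Psi (A m) (B j m)) + A m * ln (A m / (Zg * pmf pq m))"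
        using lhs_m[OF m] IHi[OF m] by linarith
    qed
    also have "\<dots> = (\<Sum>t\<in>U (Suc k) s. \<Sum>j\<in>{1..n}. Psi (W g (Suc k) s t) (W (G g j) (Suc k) s t))
        - (\<Sum>j\<in>{1..n}. \<Sum>m\<in>M. Psi (A m) (B j m)) + (\<Sum>m\<in>M. A m * ln (A m / (Zg * pmf pq m)))"
      unfolding R by (simp add: sum.distrib sum_subtractf sum.swap[of _ M])
    finally show ?thesis using key by linarith
  qed
  have pos: "\<forall>t\<in>U (Suc k) s. W g (Suc k) s t > 0 \<longrightarrow> pmf (Qr (Suc k) s) t > 0"
  proof (intro ballI impI)
    fix t assume t: "t \<in> U (Suc k) s" and Wp: "W g (Suc k) s t > 0"
    then have "t \<noteq> s" using W0 by auto
    then obtain m where m: "m \<in> M" and tm: "t \<in> U k (s @ [m])" using t unfolding U_Suc by auto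
    then have "W (gm m) k (s @ [m]) t > 0" using Wp Wg by simp
    from posm[OF m tm this] show "pmf (Qr (Suc k) s) t > 0" using Qs[OF tm] by simp
  qed
  show ?thesis unfolding concl_def using pos ineq unfolding Zg_def z_def by simp
qed

lemma main:
  assumes c: "0 < c" "c < 1"
  shows "bnd g \<Longrightarrow> (\<forall>t\<in>U k s. \<forall>j\<in>{1..n}. W (G g j) k s t \<le> c * W g k s t) \<Longrightarrow> concl k s g"
proof (induction k arbitrary: s g)
  case 0 show ?case unfolding concl_def by (rule main_base) simp
next
  case (Suc k)
  show ?case
  proof (cases "\<pi> s")
    case None show ?thesis unfolding concl_def by (rule main_base) (simp add: None)
  next
    case (Some a)
    then obtain i pq px where S: "\<pi> s = Some (i, pq, px)" by (cases a) auto
    show ?thesis by (rule main_step[OF c S Suc.prems]) (rule Suc.IH)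
  qed
qed

lemma W_G_le: "bnd g \<Longrightarrow> W (G g j) k s t \<le> W g k s t"
  unfolding W_def
  by (intro integral_mono W_integrable bnd_G) (auto simp: G_def bnd_def)

lemma per_x:
  assumes c: "0 < c" "c < 1" and g: "bnd g"
    and hyp: "\<forall>t\<in>U k s. \<forall>j\<in>{1..n}. W (G g j) k s t \<le> c * W g k s t"
    and zb: "\<forall>j\<in>{1..n}. (\<integral>a. G g j a \<partial>E) = b * (\<integral>a. g a \<partial>E)"
  shows "(\<Sum>t\<in>U k s. W g k s t * ln (W g k s t / ((\<integral>a. g a \<partial>E) * pmf (Qr k s) t)))
     \<le> real n * (\<integral>a. g a \<partial>E) * (b / c * (- ln (1 - c)) - (- ln (1 - b)))"
proof -
  let ?Z = "\<integral>a. g a \<partial>E"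
  have C: "concl k s g" by (rule main[OF c g hyp])
  have "(\<Sum>t\<in>U k s. \<Sum>j\<in>{1..n}. Psi (W g k s t) (W (G g j) k s t))
      \<le> (\<Sum>t\<in>U k s. \<Sum>j\<in>{1..n}. W (G g j) k s t / c * (- ln (1 - c)))"
    using hyp c by (intro sum_mono Psi_bound W_nonneg bnd_G g) auto
  also have "\<dots> = (\<Sum>j\<in>{1..n}. (\<Sum>t\<in>U k s. W (G g j) k s t)) / c * (- ln (1 - c))"
    by (subst sum.swap) (simp only: sum_divide_distrib[symmetric] sum_distrib_right[symmetric])
  also have "\<dots> = (\<Sum>j\<in>{1..n}. b * ?Z) / c * (- ln (1 - c))"
    using zb by (simp add: W_sum[OF bnd_G[OF g]])
  finally have Phi: "(\<Sum>t\<in>U k s. \<Sum>j\<in>{1..n}. Psi (W g k s t) (W (G g j) k s t))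
      \<le> real n * b * ?Z / c * (- ln (1 - c))" by simp
  have "Psi ?Z (b * ?Z) = ?Z * (- ln (1 - b))" for b
    by (cases "?Z = 0") (auto simp: Psi_def)
  then have ps: "(\<Sum>j\<in>{1..n}. Psi ?Z (\<integral>a. G g j a \<partial>E)) = real n * (?Z * (- ln (1 - b)))"
    using zb by simp
  show ?thesis using C Phi ps unfolding concl_def by (simp add: algebra_simps)
qed

lemma pos_x:
  assumes c: "0 < c" "c < 1" and g: "bnd g"
    and hyp: "\<forall>t\<in>U k s. \<forall>j\<in>{1..n}. W (G g j) k s t \<le> c * W g k s t"
  shows "\<forall>t\<in>U k s. W g k s t > 0 \<longrightarrow> pmf (Qr k s) t > 0"
  using main[OF c g hyp] unfolding concl_def by blast

end



lemma joint_alt: "joint_XLT D \<pi> N = bind_pmf D (\<lambda>a. map_pmf (\<lambda>t. (fst a, snd a, t)) (run_protocol \<pi> (fst a) (snd a) N []))"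
  unfolding joint_XLT_def by (rule arg_cong[where f="bind_pmf D"]) (auto simp: fun_eq_iff)

lemma probJ:
  "measure_pmf.prob (joint_XLT D \<pi> N) {(x', l, t'). \<Phi> x' l t'} =
     (\<integral>a. measure_pmf.prob (run_protocol \<pi> (fst a) (snd a) N []) {t'. \<Phi> (fst a) (snd a) t'} \<partial>D)"
  unfolding joint_alt prob_bind_pmf by (simp add: vimage_def)

lemma prob_single_cond:
  "measure_pmf.prob p {t'. C \<and> t' = t} = (if C then pmf p t else 0)"
  by (cases C) (auto simp: measure_pmf_single)

lemma pmfP: "pmf (map_pmf (\<lambda>(x, l, t). (x, t)) J) (x, t) = measure_pmf.prob J {(x', l, t'). x' = x \<and> t' = t}"
  unfolding pmf_map by (rule arg_cong[where f="measure_pmf.prob J"]) auto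

lemma pmfP1: "pmf (map_pmf fst (map_pmf (\<lambda>(x, l, t). (x, t)) J)) x = measure_pmf.prob J {(x', l, t'). x' = x}"
  unfolding pmf_map measure_map_pmf by (rule arg_cong[where f="measure_pmf.prob J"]) auto

lemma pmfP2: "pmf (map_pmf snd (map_pmf (\<lambda>(x, l, t). (x, t)) J)) t = measure_pmf.prob J {(x', l, t'). t' = t}"
  unfolding pmf_map measure_map_pmf by (rule arg_cong[where f="measure_pmf.prob J"]) auto


theorem theorem3p5:
  fixes b c :: real and n N :: nat
    and D :: "('x \<times> (nat \<Rightarrow> bool)) pmf"
    and \<pi> :: "('x, 'm) protocol" and M :: "'m set"
  assumes "0 \<le> b" "b < 1" "0 < c" "c < 1"
    and "finite (fst ` set_pmf D)"
    and "valid_protocol n (fst ` set_pmf D) M N \<pi>"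
    and "\<And>i x. i \<in> {1..n} \<Longrightarrow> x \<in> fst ` set_pmf D \<Longrightarrow>
           measure_pmf.prob D {(x', l). x' = x \<and> l i} / measure_pmf.prob D {(x', l). x' = x} = b"
    and "\<And>i x t. i \<in> {1..n} \<Longrightarrow>
           measure_pmf.prob (joint_XLT D \<pi> N) {(x', l, t'). x' = x \<and> t' = t} > 0 \<Longrightarrow>
           measure_pmf.prob (joint_XLT D \<pi> N) {(x', l, t'). x' = x \<and> t' = t \<and> l i}
             / measure_pmf.prob (joint_XLT D \<pi> N) {(x', l, t'). x' = x \<and> t' = t} \<le> c"
  shows "mutual_info (map_pmf (\<lambda>(x, l, t). (x, t)) (joint_XLT D \<pi> N))
           \<le> (- b * log 2 (1 - c) + c * log 2 (1 - b)) / c * real n"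
proof -
  note c = assms(3,4)
  define XS where "XS = fst ` set_pmf D"
  define J where "J = joint_XLT D \<pi> N"
  define P where "P = map_pmf (\<lambda>(x, l, t). (x, t)) J"
  have finXS: "finite XS" using assms(5) unfolding XS_def .
  have finM: "finite M" and spk: "\<And>t i pq px. \<pi> t = Some (i, pq, px) \<Longrightarrow>
         i \<in> {1..n} \<and> set_pmf pq \<subseteq> M \<and> (\<forall>x\<in>XS. set_pmf (px x) \<subseteq> M)"
    using assms(6) unfolding valid_protocol_def XS_def by auto
  have loc: "proto \<pi> x n M" if "x \<in> XS" for x
    unfolding proto_def using finM spk that by blast
  obtain x0 where x0: "x0 \<in> XS" unfolding XS_def using set_pmf_not_empty[of D] by auto
  define UU where "UU = proto.U M N []"
  have finU: "finite UU" unfolding UU_def by (rule proto.finite_U[OF loc[OF x0]])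
  define Q where "Q = run_protocol \<pi> x0 (\<lambda>_. False) N []"
  have Qx: "run_protocol \<pi> x (\<lambda>_. False) N [] = Q" for x unfolding Q_def by (rule run_false_indep)
  define gx where "gx x = (\<lambda>a::'x \<times> (nat \<Rightarrow> bool). if fst a = x then 1 else (0::real))" for x
  define f where "f a t = pmf (run_protocol \<pi> (fst a) (snd a) N []) t" for a t
  define p where "p x t = pmf P (x, t)" for x t
  define Z where "Z x = pmf (map_pmf fst P) x" for x
  define pt where "pt t = pmf (map_pmf snd P) t" for t
  define K where "K = b / c * (- ln (1 - c)) - (- ln (1 - b))"
  have bgx: "proto.bnd (gx x)" if "x \<in> XS" for x
    unfolding proto.bnd_def[OF loc[OF that]] gx_def by auto
  have Wx: "proto.W \<pi> x D snd (gx x) N [] t = (\<integral>a. gx x a * f a t \<partial>D)" if "x \<in> XS" for x t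
    unfolding proto.W_def[OF loc[OF that]]
    by (rule Bochner_Integration.integral_cong[OF refl]) (auto simp: gx_def f_def)
  have WGx: "proto.W \<pi> x D snd (proto.G snd (gx x) j) N [] t = (\<integral>a. gx x a * (if snd a j then 1 else 0) * f a t \<partial>D)"
    if "x \<in> XS" for x t j
    unfolding proto.W_def[OF loc[OF that]] proto.G_def[OF loc[OF that]]
    by (rule Bochner_Integration.integral_cong[OF refl]) (auto simp: gx_def f_def)
  have pJ: "measure_pmf.prob J {(x', l, t'). x' = x \<and> t' = t} = (\<integral>a. gx x a * f a t \<partial>D)" for x t
    unfolding J_def probJ[of D \<pi> N "\<lambda>x' l t'. x' = x \<and> t' = t"]
    by (rule Bochner_Integration.integral_cong[OF refl]) (auto simp: gx_def f_def measure_pmf_single)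
  have pJl: "measure_pmf.prob J {(x', l, t'). x' = x \<and> t' = t \<and> l j} = (\<integral>a. gx x a * (if snd a j then 1 else 0) * f a t \<partial>D)" for x t j
    unfolding J_def probJ[of D \<pi> N "\<lambda>x' l t'. x' = x \<and> t' = t \<and> l j"]
    by (rule Bochner_Integration.integral_cong[OF refl]) (auto simp: gx_def f_def measure_pmf_single)
  have pp: "p x t = (\<integral>a. gx x a * f a t \<partial>D)" for x t
    unfolding p_def P_def pmfP pJ ..
  have pZ: "Z x = (\<integral>a. gx x a \<partial>D)" for x
  proof -
    have "Z x = measure_pmf.prob J {(x', l, t'). x' = x}" unfolding Z_def P_def by (rule pmfP1)
    also have "\<dots> = (\<integral>a. gx x a \<partial>D)"
      unfolding J_def probJ[of D \<pi> N "\<lambda>x' l t'. x' = x"]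
      by (rule Bochner_Integration.integral_cong[OF refl]) (auto simp: gx_def)
    finally show ?thesis .
  qed
  have pD: "(\<integral>a. gx x a \<partial>D) = measure_pmf.prob D {(x', l). x' = x}" for x
  proof -
    have "gx x = indicator {(x', l). x' = x}" unfolding gx_def by (auto simp: fun_eq_iff)
    then show ?thesis by simp
  qed
  have pDl: "(\<integral>a. proto.G snd (gx x) j a \<partial>D) = measure_pmf.prob D {(x', l). x' = x \<and> l j}" if "x \<in> XS" for x j
  proof -
    have "proto.G snd (gx x) j = indicator {(x', l). x' = x \<and> l j}"
      unfolding gx_def proto.G_def[OF loc[OF that]] by (auto simp: fun_eq_iff)
    then show ?thesis by simp
  qed
  have ppt: "pt t = (\<integral>a. f a t \<partial>D)" for t
  proof -
    have "pt t = measure_pmf.prob J {(x', l, t'). t' = t}" unfolding pt_def P_def by (rule pmfP2)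
    also have "\<dots> = (\<integral>a. f a t \<partial>D)"
      unfolding J_def probJ[of D \<pi> N "\<lambda>x' l t'. t' = t"]
      by (rule Bochner_Integration.integral_cong[OF refl]) (auto simp: f_def measure_pmf_single)
    finally show ?thesis .
  qed
  have psum: "pt t = (\<Sum>x\<in>XS. p x t)" for t
  proof -
    have int: "integrable (measure_pmf D) (\<lambda>a. gx x a * f a t)" for x
      by (rule measure_pmf.integrable_const_bound[where B=1]) (auto simp: gx_def f_def pmf_le_1)
    have "(\<Sum>x\<in>XS. p x t) = (\<integral>a. (\<Sum>x\<in>XS. gx x a * f a t) \<partial>D)"
      unfolding pp by (rule Bochner_Integration.integral_sum[where f="\<lambda>x a. gx x a * f a t", symmetric]) (rule int)
    also have "\<dots> = (\<integral>a. f a t \<partial>D)"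
    proof (rule integral_cong_AE)
      show "AE a in measure_pmf D. (\<Sum>x\<in>XS. gx x a * f a t) = f a t"
      proof (rule AE_pmfI)
        fix a assume "a \<in> set_pmf D"
        then have "fst a \<in> XS" unfolding XS_def by auto
        have "(\<Sum>x\<in>XS. gx x a * f a t) = (\<Sum>x\<in>XS. if x = fst a then f a t else 0)"
          by (rule sum.cong) (auto simp: gx_def)
        then show "(\<Sum>x\<in>XS. gx x a * f a t) = f a t"
          using finXS \<open>fst a \<in> XS\<close> by simp
      qed
    qed auto
    finally show ?thesis using ppt by simp
  qed
  have Zpos: "Z x > 0" if xx: "x \<in> XS" for x
  proof -
    obtain a where a: "a \<in> set_pmf D" "fst a = x" using xx unfolding XS_def by blast
    have "measure_pmf.prob D {(x', l). x' = x} > 0"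
      by (rule measure_pmf_posI[OF a(1)]) (use a in auto)
    then show ?thesis using pZ pD by simp
  qed
  have zb: "\<forall>j\<in>{1..n}. (\<integral>a. proto.G snd (gx x) j a \<partial>D) = b * (\<integral>a. gx x a \<partial>D)" if x: "x \<in> XS" for x
  proof
    fix j assume j: "j \<in> {1..n}"
    have "measure_pmf.prob D {(x', l). x' = x \<and> l j} / measure_pmf.prob D {(x', l). x' = x} = b"
      using assms(7)[OF j] x unfolding XS_def by blast
    moreover have "measure_pmf.prob D {(x', l). x' = x} > 0" using Zpos[OF x] pZ pD by simp
    ultimately show "(\<integral>a. proto.G snd (gx x) j a \<partial>D) = b * (\<integral>a. gx x a \<partial>D)"
      unfolding pDl[OF x] pD by (simp add: divide_eq_eq)
  qed
  have hyp: "\<forall>t\<in>proto.U M N []. \<forall>j\<in>{1..n}. proto.W \<pi> x D snd (proto.G snd (gx x) j) N [] t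
       \<le> c * proto.W \<pi> x D snd (gx x) N [] t" if x: "x \<in> XS" for x
  proof (intro ballI)
    fix t j assume j: "j \<in> {1..n}"
    have e1: "proto.W \<pi> x D snd (gx x) N [] t = measure_pmf.prob J {(x', l, t'). x' = x \<and> t' = t}"
      using Wx[OF x] pJ by simp
    have e2: "proto.W \<pi> x D snd (proto.G snd (gx x) j) N [] t = measure_pmf.prob J {(x', l, t'). x' = x \<and> t' = t \<and> l j}"
      using WGx[OF x] pJl by simp
    show "proto.W \<pi> x D snd (proto.G snd (gx x) j) N [] t \<le> c * proto.W \<pi> x D snd (gx x) N [] t"
    proof (cases "measure_pmf.prob J {(x', l, t'). x' = x \<and> t' = t} > 0")
      case True
      then have "measure_pmf.prob J {(x', l, t'). x' = x \<and> t' = t \<and> l j} / measure_pmf.prob J {(x', l, t'). x' = x \<and> t' = t} \<le> c"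
        using assms(8)[OF j] unfolding J_def by blast
      then show ?thesis using True unfolding e1 e2 by (simp add: divide_le_eq)
    next
      case False
      then have "measure_pmf.prob J {(x', l, t'). x' = x \<and> t' = t} = 0"
        using measure_nonneg[of "measure_pmf J" "{(x', l, t'). x' = x \<and> t' = t}"] by linarith
      then have "proto.W \<pi> x D snd (gx x) N [] t = 0" using e1 by simp
      moreover have "proto.W \<pi> x D snd (proto.G snd (gx x) j) N [] t \<le> proto.W \<pi> x D snd (gx x) N [] t"
        by (rule proto.W_G_le[OF loc[OF x] bgx[OF x]])
      ultimately show ?thesis by simp
    qed
  qed
  have perx: "(\<Sum>t\<in>UU. p x t * ln (p x t / (Z x * pmf Q t))) \<le> real n * Z x * K" if x: "x \<in> XS" for x
    using proto.per_x[OF loc[OF x] c bgx[OF x] hyp[OF x] zb[OF x]]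
    unfolding UU_def K_def Qx Wx[OF x] pp[symmetric] pZ[symmetric] by simp
  have posx: "pmf Q t > 0" if x: "x \<in> XS" and t: "t \<in> UU" and pos: "p x t > 0" for x t
    using proto.pos_x[OF loc[OF x] c bgx[OF x] hyp[OF x]] t pos
    unfolding UU_def Qx Wx[OF x] pp[symmetric] by simp
  have suppP: "set_pmf P \<subseteq> XS \<times> UU"
  proof
    fix xt assume "xt \<in> set_pmf P"
    then obtain a t where a: "a \<in> set_pmf D" and t: "t \<in> set_pmf (run_protocol \<pi> (fst a) (snd a) N [])"
      and xt: "xt = (fst a, t)"
      unfolding P_def J_def joint_alt by auto
    have xa: "fst a \<in> XS" using a unfolding XS_def by auto
    have "t \<in> UU" using proto.run_support[OF loc[OF xa]] t unfolding UU_def by blast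
    then show "xt \<in> XS \<times> UU" using xa xt by simp
  qed
  have suppQ: "set_pmf Q \<subseteq> UU" unfolding Q_def UU_def by (rule proto.run_support[OF loc[OF x0]])
  have sumZ: "(\<Sum>x\<in>XS. Z x) = 1"
    unfolding Z_def by (rule sum_pmf_eq_1[OF finXS]) (use suppP in auto)
  have sumpt: "(\<Sum>t\<in>UU. pt t) = 1"
    unfolding pt_def by (rule sum_pmf_eq_1[OF finU]) (use suppP in auto)
  have sumQ: "(\<Sum>t\<in>UU. pmf Q t) = 1" by (rule sum_pmf_eq_1[OF finU suppQ])
  have p0: "p x t \<ge> 0" for x t unfolding p_def by simp
  have pt_ge: "pt t \<ge> p x t" if "x \<in> XS" for x t
    unfolding psum using finXS that p0 by (intro member_le_sum) auto
  have MI: "mutual_info P = (\<Sum>x\<in>XS. \<Sum>t\<in>UU. p x t * log 2 (p x t / (Z x * pt t)))"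
  proof -
    have "mutual_info P = (\<Sum>ab\<in>XS \<times> UU. pmf P ab * log 2 (pmf P ab / (pmf (map_pmf fst P) (fst ab) * pmf (map_pmf snd P) (snd ab))))"
      unfolding mutual_info_def
      by (rule sum.mono_neutral_left) (use finXS finU suppP in \<open>auto simp: pmf_eq_0_set_pmf\<close>)
    also have "\<dots> = (\<Sum>x\<in>XS. \<Sum>t\<in>UU. p x t * log 2 (p x t / (Z x * pt t)))"
      unfolding sum.cartesian_product p_def Z_def pt_def by (simp add: case_prod_beta)
    finally show ?thesis .
  qed
  have termeq: "p x t * log 2 (p x t / (Z x * pt t)) = (p x t * ln (p x t / (Z x * pmf Q t)) - p x t * ln (pt t / pmf Q t)) / ln 2"
    if x: "x \<in> XS" and t: "t \<in> UU" for x t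
  proof (cases "p x t = 0")
    case True then show ?thesis by simp
  next
    case False
    then have pp0: "p x t > 0" using p0[of x t] by simp
    have Zp: "Z x > 0" by (rule Zpos[OF x])
    have ptp: "pt t > 0" using pt_ge[OF x, of t] pp0 by simp
    have Qp: "pmf Q t > 0" by (rule posx[OF x t pp0])
    have "ln (p x t / (Z x * pt t)) = ln (p x t / (Z x * pmf Q t)) - ln (pt t / pmf Q t)"
      using pp0 Zp ptp Qp by (simp add: ln_div ln_mult)
    then show ?thesis unfolding log_def by (simp add: right_diff_distrib diff_divide_distrib)
  qed
  have S1: "(\<Sum>x\<in>XS. \<Sum>t\<in>UU. p x t * ln (p x t / (Z x * pmf Q t))) \<le> real n * K"
  proof -
    have "(\<Sum>x\<in>XS. \<Sum>t\<in>UU. p x t * ln (p x t / (Z x * pmf Q t))) \<le> (\<Sum>x\<in>XS. real n * K * Z x)"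
      using perx by (intro sum_mono) (simp add: mult_ac)
    also have "\<dots> = real n * K" using sumZ by (simp add: sum_distrib_left[symmetric])
    finally show ?thesis .
  qed
  have S2: "(\<Sum>x\<in>XS. \<Sum>t\<in>UU. p x t * ln (pt t / pmf Q t)) \<ge> 0"
  proof -
    have "(\<Sum>x\<in>XS. \<Sum>t\<in>UU. p x t * ln (pt t / pmf Q t)) = (\<Sum>t\<in>UU. pt t * ln (pt t / pmf Q t))"
      by (subst sum.swap) (simp add: psum sum_distrib_right)
    also have "\<dots> \<ge> (\<Sum>t\<in>UU. pt t - pmf Q t)"
    proof (rule sum_mono, rule gibbs_term)
      fix t assume t: "t \<in> UU"
      show "pt t \<ge> 0" unfolding pt_def by simp
      show "pmf Q t \<ge> 0" by simp
      assume "pt t > 0"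
      then obtain x where x: "x \<in> XS" and "p x t > 0" unfolding psum
        by (metis (no_types, lifting) not_less sum_nonpos)
      then show "pmf Q t > 0" using posx t by blast
    qed
    also have "(\<Sum>t\<in>UU. pt t - pmf Q t) = 0" using sumpt sumQ by (simp add: sum_subtractf)
    finally show ?thesis .
  qed
  have "mutual_info P = ((\<Sum>x\<in>XS. \<Sum>t\<in>UU. p x t * ln (p x t / (Z x * pmf Q t)))
      - (\<Sum>x\<in>XS. \<Sum>t\<in>UU. p x t * ln (pt t / pmf Q t))) / ln 2"
  proof -
    have "mutual_info P = (\<Sum>x\<in>XS. \<Sum>t\<in>UU. (p x t * ln (p x t / (Z x * pmf Q t)) - p x t * ln (pt t / pmf Q t)) / ln 2)"
      unfolding MI by (intro sum.cong refl) (simp add: termeq)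
    then show ?thesis by (simp only: sum_divide_distrib[symmetric] sum_subtractf)
  qed
  also have "\<dots> \<le> real n * K / ln 2"
    using S1 S2 by (intro divide_right_mono) auto
  also have "\<dots> = (- b * log 2 (1 - c) + c * log 2 (1 - b)) / c * real n"
    unfolding K_def log_def using c by (simp add: field_simps)
  finally show ?thesis unfolding P_def J_def .
qed


end
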